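(* Let $\mu\in\mathbb F_q\setminus\{0\}$. If $g$ is a generator of $\mathcal W_0$ such that $g\cap\Delta$ is an $(n-2)$-space, then $g\cap\mathcal Q_\mu$ is a cone whose vertex is an $(n-3)$-space (empty if $n=2$) and whose base is a non-degenerate conic.
   Context: Let $q$ be an even prime power and $n\ge 2$ an integer. Let $\mathrm{PG}(2n+1,q)$ have homogeneous coordinates $(X_1,\dots,X_{2n+2})$. Fix $\delta\in\mathbb F_q$ such that $X^2+X+\delta$ is irreducible over $\mathbb F_q$. For $\mu\in\mathbb F_q$ let $\mathcal Q_\mu$ be the quadric $X_1^2+X_1X_{2n+2}+\delta X_{2n+2}^2+\sum_{i=2}^{n+1}X_iX_{2n+3-i}+\mu(X_{2n}^2+X_{2n}X_{2n+1}+\delta X_{2n+1}^2)=0$ (an elliptic quadric $\mathcal Q^-(2n+1,q)$), and $\perp_\mu$ the symplectic polarity defined by the alternating form $B_\mu(X,Y)=\sum_{i=1}^{2n+2}X_iY_{2n+3-i}+\mu(X_{2n}Y_{2n+1}+X_{2n+1}Y_{2n})$ (the polarity associated with $\mathcal Q_\mu$). Let $\mathcal W_\mu$ be the associated symplectic polar space; its generators are the totally isotropic $n$-spaces. Let $\Delta$ be the $(2n-1)$-space $X_{2n}=X_{2n+1}=0$. A $(-1)$-space is the empty set. *)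

theory Defs
  imports Main "HOL-Library.Function_Algebras" "HOL-Computational_Algebra.Polynomial"
begin

text \<open>Vectors of F_q^(2n+2) are modelled as functions nat => 'a supported on {1..2n+2}
  (coordinate X_i is v i). A projective k-space is a vector subspace of dimension k+1;
  a point set of PG(2n+1,q) is modelled by the corresponding set of vectors (including 0).\<close>

definition smul :: "'a::field \<Rightarrow> (nat \<Rightarrow> 'a) \<Rightarrow> (nat \<Rightarrow> 'a)" where
  "smul c v = (\<lambda>i. c * v i)"

lemma vector_space_smul: "vector_space (smul :: 'a::field \<Rightarrow> _)"
  by unfold_locales (simp_all add: smul_def fun_eq_iff algebra_simps)

definition ambient :: "nat \<Rightarrow> (nat \<Rightarrow> 'a::field) set" where
  "ambient n = {v. \<forall>i. i \<notin> {1..2*n+2} \<longrightarrow> v i = 0}"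

definition is_space :: "nat \<Rightarrow> nat \<Rightarrow> (nat \<Rightarrow> 'a::field) set \<Rightarrow> bool" where
  "is_space n d S \<longleftrightarrow> S \<subseteq> ambient n \<and> module.subspace smul S \<and> vector_space.dim smul S = d"

definition Qmu :: "nat \<Rightarrow> 'a::field \<Rightarrow> 'a \<Rightarrow> (nat \<Rightarrow> 'a) \<Rightarrow> 'a" where
  "Qmu n \<delta> \<mu> X = X 1 ^ 2 + X 1 * X (2*n+2) + \<delta> * X (2*n+2) ^ 2
     + (\<Sum>i=2..n+1. X i * X (2*n+3-i))
     + \<mu> * (X (2*n) ^ 2 + X (2*n) * X (2*n+1) + \<delta> * X (2*n+1) ^ 2)"

definition Bmu :: "nat \<Rightarrow> 'a::field \<Rightarrow> (nat \<Rightarrow> 'a) \<Rightarrow> (nat \<Rightarrow> 'a) \<Rightarrow> 'a" where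
  "Bmu n \<mu> X Y = (\<Sum>i=1..2*n+2. X i * Y (2*n+3-i))
     + \<mu> * (X (2*n) * Y (2*n+1) + X (2*n+1) * Y (2*n))"

definition generator :: "nat \<Rightarrow> 'a::field \<Rightarrow> (nat \<Rightarrow> 'a) set \<Rightarrow> bool" where
  "generator n \<mu> g \<longleftrightarrow> is_space n (n+1) g \<and> (\<forall>v\<in>g. \<forall>w\<in>g. Bmu n \<mu> v w = 0)"

definition Delta :: "nat \<Rightarrow> (nat \<Rightarrow> 'a::field) set" where
  "Delta n = {v \<in> ambient n. v (2*n) = 0 \<and> v (2*n+1) = 0}"

text \<open>The point set of g on Q_mu is a cone with vertex K (projective (dim K - 1)-space)
  and base the conic pi \<inter> Q_mu, where pi is a plane of g skew to K spanning g with K,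
  and the conic is non-degenerate: the quadratic form Q_mu restricted to pi has no
  nonzero singular vector (Q(v)=0 and v in the radical of the polar form B_mu on pi).\<close>
definition cone_over_nondeg_conic ::
    "nat \<Rightarrow> 'a::field \<Rightarrow> 'a \<Rightarrow> (nat \<Rightarrow> 'a) set \<Rightarrow> (nat \<Rightarrow> 'a) set \<Rightarrow> bool" where
  "cone_over_nondeg_conic n \<delta> \<mu> g K \<longleftrightarrow>
     (\<exists>P. is_space n 3 P \<and> K \<subseteq> g \<and> P \<subseteq> g \<and> K \<inter> P = {0}
        \<and> g = {k + p | k p. k \<in> K \<and> p \<in> P}
        \<and> {v \<in> g. Qmu n \<delta> \<mu> v = 0} = {k + p | k p. k \<in> K \<and> p \<in> P \<and> Qmu n \<delta> \<mu> p = 0}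
        \<and> (\<forall>p\<in>P. Qmu n \<delta> \<mu> p = 0 \<and> (\<forall>p'\<in>P. Bmu n \<mu> p p' = 0) \<longrightarrow> p = 0))"

end

theory Submission
  imports Defs
begin


interpretation V: vector_space "smul :: 'a::field \<Rightarrow> (nat \<Rightarrow> 'a) \<Rightarrow> (nat \<Rightarrow> 'a)"
  by (rule vector_space_smul)

lemma smul_apply: "smul c v i = c * v i" by (simp add: smul_def)

lemma finite_ambient: "finite (ambient n :: (nat \<Rightarrow> 'a::{finite,field}) set)"
proof -
  have "ambient n \<subseteq> {f :: nat \<Rightarrow> 'a. \<forall>x. (x \<in> {1..2*n+2} \<longrightarrow> f x \<in> UNIV) \<and> (x \<notin> {1..2*n+2} \<longrightarrow> f x = 0)}"
    by (auto simp: ambient_def)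
  then show ?thesis using finite_set_of_finite_funs[of "{1..2*n+2}" "UNIV::'a set" 0]
    using finite_subset by auto
qed

lemma char2_two: "CHAR('a::field) = 2 \<Longrightarrow> (2::'a) = 0"
  using of_nat_CHAR[where 'a='a] by simp

lemma char2_add_self: "CHAR('a::field) = 2 \<Longrightarrow> (x::'a) + x = 0"
  by (metis char2_two mult_2 mult_zero_left)

lemma char2_sq_add: "CHAR('a::field) = 2 \<Longrightarrow> ((x::'a) + y)^2 = x^2 + y^2"
proof -
  assume c: "CHAR('a) = 2"
  have "(x+y)^2 = x^2 + y^2 + 2*x*y" by (simp add: power2_eq_square algebra_simps)
  then show ?thesis using char2_two[OF c] by simp
qed

lemma anis:
  fixes \<delta> x y :: "'a::field"
  assumes irr: "irreducible [:\<delta>, 1, 1:]" and e: "x^2 + x*y + \<delta>*y^2 = 0"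
  shows "x = 0 \<and> y = 0"
proof (cases "y = 0")
  case True then show ?thesis using e by simp
next
  case False
  define r where "r = x / y"
  have "poly [:\<delta>, 1, 1:] r = (x^2 + x*y + \<delta>*y^2) / y^2"
    using False by (simp add: r_def field_simps power2_eq_square)
  then have "poly [:\<delta>, 1, 1:] r = 0" using e by simp
  then have "[:-r, 1:] dvd [:\<delta>, 1, 1:]" using poly_eq_0_iff_dvd by blast
  then obtain q where q: "[:\<delta>, 1, 1:] = [:-r, 1:] * q" by auto
  from irr q have "is_unit [:-r, 1:] \<or> is_unit q" using irreducibleD[OF irr, of "[:-r,1:]" q] by simp
  moreover have "\<not> is_unit [:-r, 1:]" by (simp add: is_unit_iff_degree)
  moreover have "degree q = 1"
  proof -
    have "q \<noteq> 0" using q by auto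
    then have "degree ([:-r, 1:] * q) = degree [:-r,1:] + degree q" using degree_mult_eq[of "[:-r,1:]" q] by simp
    then have "degree ([:-r, 1:] * q) = 1 + degree q" by simp
    moreover have "degree [:\<delta>, 1, 1:] = 2" by simp
    ultimately have "1 + degree q = 2" using q by metis
    then show ?thesis by simp
  qed
  then have "\<not> is_unit q" using is_unit_iff_degree[of q] by fastforce
  ultimately show ?thesis by simp
qed



interpretation VP: vector_space_pair "smul :: 'a::field \<Rightarrow> (nat \<Rightarrow> 'a) \<Rightarrow> (nat \<Rightarrow> 'a)" "smul :: 'a::field \<Rightarrow> (nat \<Rightarrow> 'a) \<Rightarrow> (nat \<Rightarrow> 'a)"
  by unfold_locales

lemma smul_fun_eq: "smul c v = (\<lambda>i. c * v i)" by (simp add: smul_def)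

lemma dim_hyper:
  fixes S :: "(nat \<Rightarrow> 'a::field) set"
  assumes sub: "V.subspace S" and fin: "finite S"
  shows "V.dim S \<le> V.dim {s\<in>S. s j = 0} + 1"
proof (cases "\<forall>s\<in>S. s j = 0")
  case True
  then have "{s\<in>S. s j = 0} = S" by auto
  then show ?thesis by simp
next
  case False
  then obtain s0 where s0: "s0 \<in> S" "s0 j \<noteq> 0" by auto
  obtain B where B: "B \<subseteq> {s\<in>S. s j = 0}" "V.independent B" "{s\<in>S. s j = 0} \<subseteq> V.span B"
     "card B = V.dim {s\<in>S. s j = 0}"
    using V.basis_exists by blast
  have "B \<subseteq> S" using B(1) by auto
  then have finB: "finite B" using fin by (rule finite_subset)
  have "S \<subseteq> V.span (insert s0 B)"
  proof
    fix s assume s: "s \<in> S"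
    define c where "c = s j / s0 j"
    have "s - smul c s0 \<in> S" using sub s s0 by (simp add: V.subspace_diff V.subspace_scale)
    moreover have "(s - smul c s0) j = 0" using s0 by (simp add: c_def smul_apply)
    ultimately have "s - smul c s0 \<in> V.span B" using B(3) by auto
    then show "s \<in> V.span (insert s0 B)" using V.span_breakdown_eq by blast
  qed
  then have "V.dim S \<le> card (insert s0 B)" using finB by (simp add: V.dim_le_card)
  also have "\<dots> \<le> card B + 1" using finB by (simp add: card_insert_if)
  finally show ?thesis using B(4) by simp
qed

lemma linear_smulI:
  assumes "\<And>x y. f (x+y) = f x + f y" "\<And>c x. f (smul c x) = smul c (f x)"
  shows "Vector_Spaces.linear smul smul (f :: (nat \<Rightarrow> 'a::field) \<Rightarrow> (nat \<Rightarrow> 'a))"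
  using assms vector_space_smul by (simp add: Vector_Spaces.linear_iff)

lemma dim_inj_image:
  fixes S :: "(nat \<Rightarrow> 'a::field) set"
  assumes lf: "Vector_Spaces.linear smul smul f" and sub: "V.subspace S" and inj: "inj_on f S"
  shows "V.dim (f ` S) = V.dim S"
proof -
  obtain B where B: "B \<subseteq> S" "V.independent B" "S \<subseteq> V.span B" "card B = V.dim S"
    using V.basis_exists[of S] by auto
  have spS: "V.span S = S" using sub by (simp add: V.span_eq_iff)
  have "V.span S = V.span B"
    using B V.span_mono[of B S] V.span_mono[of S "V.span B"] V.span_span[of B] by auto
  then have spB: "V.span B = S" using spS by simp
  have ind: "V.independent (f ` B)"
    using VP.linear_independent_injective_image[OF lf B(2)] inj spB by simp
  have "card (f ` B) = card B"
    using card_image[of f B] inj_on_subset[OF inj B(1)] by simp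
  moreover have "V.span (f ` B) = f ` S" using VP.linear_span_image[OF lf, of B] spB by simp
  ultimately have "V.dim (f ` S) = card B"
    using ind by (metis V.dim_eq_card_independent V.dim_span)
  then show ?thesis using B(4) by simp
qed



definition QP :: "nat \<Rightarrow> 'a::field \<Rightarrow> nat set \<Rightarrow> (nat \<Rightarrow> 'a) \<Rightarrow> 'a" where
  "QP n \<delta> P v = v 1 ^ 2 + v 1 * v (2*n+2) + \<delta> * v (2*n+2) ^ 2 + (\<Sum>i\<in>P. v i * v (2*n+3-i))"

definition supp_ok :: "nat \<Rightarrow> nat set \<Rightarrow> (nat \<Rightarrow> 'a::zero) \<Rightarrow> bool" where
  "supp_ok n P s \<longleftrightarrow> (\<forall>j. j \<notin> {1, 2*n+2} \<union> P \<union> (\<lambda>i. 2*n+3-i) ` P \<longrightarrow> s j = 0)"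

lemma subspace_coord0:
  fixes S :: "(nat \<Rightarrow> 'a::field) set"
  assumes "V.subspace S" shows "V.subspace {s\<in>S. s j = 0}"
  using assms unfolding V.subspace_def by (auto simp: smul_apply)

lemma QP_cong:
  assumes "p \<notin> {1, 2*n+2} \<union> P \<union> (\<lambda>i. 2*n+3-i) ` P" "\<And>j. j \<noteq> p \<Longrightarrow> v j = w j"
  shows "QP n \<delta> P v = QP n \<delta> P w"
proof -
  have "(\<Sum>i\<in>P. v i * v (2*n+3-i)) = (\<Sum>i\<in>P. w i * w (2*n+3-i))"
  proof (rule sum.cong)
    fix x assume x: "x \<in> P"
    then have "x \<noteq> p" "2*n+3-x \<noteq> p" using assms(1) by auto
    then show "v x * v (2*n+3-x) = w x * w (2*n+3-x)" using assms(2) by simp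
  qed simp
  moreover have "v 1 = w 1" "v (2*n+2) = w (2*n+2)" using assms by auto
  ultimately show ?thesis unfolding QP_def by simp
qed

lemma core:
  fixes S :: "(nat \<Rightarrow> 'a::field) set" and \<delta> :: 'a
  assumes "finite P" "P \<subseteq> {2..n+1}" and irr: "irreducible [:\<delta>, 1, 1:]"
  shows "V.subspace S \<Longrightarrow> finite S \<Longrightarrow> (\<forall>s\<in>S. supp_ok n P s) \<Longrightarrow> (\<forall>s\<in>S. QP n \<delta> P s = 0)
     \<Longrightarrow> V.dim S \<le> card P"
  using assms(1,2)
proof (induction P arbitrary: S rule: finite_induct)
  case empty
  have "S \<subseteq> V.span {}"
  proof
    fix s assume s: "s \<in> S"
    have "s 1 ^ 2 + s 1 * s (2*n+2) + \<delta> * s (2*n+2) ^ 2 = 0"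
      using empty.prems(4) s by (simp add: QP_def)
    then have "s 1 = 0 \<and> s (2*n+2) = 0" using anis[OF irr] by blast
    moreover have "\<forall>j. j \<notin> {1, 2*n+2} \<longrightarrow> s j = 0"
      using empty.prems(3) s by (simp add: supp_ok_def)
    ultimately have "s j = 0" for j by (cases "j = 1 \<or> j = 2*n+2") auto
    then have "s = 0" by (intro ext) (simp add: zero_fun_def)
    then show "s \<in> V.span {}" by simp
  qed
  then have "V.dim S \<le> card ({}::(nat \<Rightarrow> 'a) set)" by (rule V.dim_le_card) simp
  then show ?case by simp
next
  case (insert i P)
  define p where "p = 2*n+3-i"
  have iP: "i \<in> {2..n+1}" and Psub: "P \<subseteq> {2..n+1}" using insert.prems(5) by auto
  have pnot: "p \<notin> {1, 2*n+2} \<union> P \<union> (\<lambda>i. 2*n+3-i) ` P"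
  proof -
    have pge: "p \<ge> n+2" using iP by (auto simp: p_def)
    have "p \<noteq> 1" "p \<noteq> 2*n+2" using iP by (auto simp: p_def)
    moreover have "p \<notin> P" using Psub pge by auto
    moreover have "p \<notin> (\<lambda>i. 2*n+3-i) ` P"
    proof
      assume "p \<in> (\<lambda>i. 2*n+3-i) ` P"
      then obtain j where "j \<in> P" "p = 2*n+3-j" by auto
      then have "j = i" using iP Psub by (auto simp: p_def)
      then show False using \<open>j \<in> P\<close> insert.hyps(2) by simp
    qed
    ultimately show ?thesis by auto
  qed
  have inot: "i \<notin> {1, 2*n+2} \<union> P \<union> (\<lambda>i. 2*n+3-i) ` P"
  proof -
    have "\<forall>x\<in>P. 2*n+3-x \<ge> n+2" using Psub by (force dest: subsetD)
    then have "i \<notin> (\<lambda>i. 2*n+3-i) ` P" using iP by fastforce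
    then show ?thesis using iP insert.hyps(2) by auto
  qed
  have QPins: "QP n \<delta> (insert i P) v = QP n \<delta> P v + v i * v p" for v :: "nat \<Rightarrow> 'a"
    using insert.hyps by (simp add: QP_def p_def algebra_simps)
  have suppins: "s j = 0" if "s \<in> S" "j \<notin> {1, 2*n+2} \<union> P \<union> (\<lambda>i. 2*n+3-i) ` P" "j \<noteq> i" "j \<noteq> p" for s j
    using insert.prems(3) that by (auto simp: supp_ok_def p_def)
  have cardins: "card (insert i P) = card P + 1" using insert.hyps by simp
  show ?case
  proof (cases "\<forall>s\<in>S. s i = 0")
    case True
    define S1 where "S1 = {s\<in>S. s p = 0}"
    have "V.dim S1 \<le> card P"
    proof (rule insert.IH)
      show "V.subspace S1" unfolding S1_def by (rule subspace_coord0[OF insert.prems(1)])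
      show "finite S1" using insert.prems(2) by (simp add: S1_def)
      show "\<forall>s\<in>S1. supp_ok n P s"
        unfolding supp_ok_def S1_def using True suppins by blast
      show "\<forall>s\<in>S1. QP n \<delta> P s = 0"
        unfolding S1_def using insert.prems(4) QPins by auto
      show "P \<subseteq> {2..n+1}" by fact
    qed
    moreover have "V.dim S \<le> V.dim S1 + 1"
      unfolding S1_def by (rule dim_hyper[OF insert.prems(1,2)])
    ultimately show ?thesis using cardins by simp
  next
    case False
    then obtain s0 where s0: "s0 \<in> S" "s0 i \<noteq> 0" by auto
    define S0 where "S0 = {s\<in>S. s i = 0}"
    define \<zeta> where "\<zeta> = (\<lambda>v::nat \<Rightarrow> 'a. v(p := 0))"
    have lin: "Vector_Spaces.linear smul smul \<zeta>"
      by (rule linear_smulI) (auto simp: \<zeta>_def fun_eq_iff smul_apply)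
    have sub0: "V.subspace S0" unfolding S0_def by (rule subspace_coord0[OF insert.prems(1)])
    have inj: "inj_on \<zeta> S0"
    proof -
      have "x = 0" if x: "x \<in> S0" "\<zeta> x = 0" for x
      proof -
        have xj: "x j = 0" if "j \<noteq> p" for j
          using fun_cong[OF x(2), of j] that by (simp add: \<zeta>_def)
        have xs: "x + s0 \<in> S" using x(1) s0(1) insert.prems(1) unfolding S0_def V.subspace_def by auto
        have e0: "QP n \<delta> (insert i P) (x + s0) = 0" using insert.prems(4) xs by auto
        have e1: "QP n \<delta> P (x + s0) = QP n \<delta> P s0"
          by (rule QP_cong[OF pnot]) (simp add: xj)
        have e2: "QP n \<delta> (insert i P) s0 = 0" using insert.prems(4) s0 by auto
        have e3: "x i = 0" using x(1) by (simp add: S0_def)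
        have A: "QP n \<delta> P s0 + s0 i * (x p + s0 p) = 0"
          using e0 QPins[of "x + s0"] e1 e3 by (simp add: add.commute)
        have B: "QP n \<delta> P s0 + s0 i * s0 p = 0" using e2 QPins[of s0] by simp
        have "s0 i * x p = (QP n \<delta> P s0 + s0 i * (x p + s0 p)) - (QP n \<delta> P s0 + s0 i * s0 p)"
          by (simp add: algebra_simps)
        then have "s0 i * x p = 0" using A B by simp
        then have "x p = 0" using s0 by simp
        then have "x j = 0" for j using xj by (cases "j = p") auto
        then show "x = 0" by (intro ext) (simp add: zero_fun_def)
      qed
      then show ?thesis using VP.linear_inj_on_iff_eq_0[OF lin sub0] by blast
    qed
    have "V.dim (\<zeta> ` S0) \<le> card P"
    proof (rule insert.IH)
      show "V.subspace (\<zeta> ` S0)" by (rule VP.linear_subspace_image[OF lin sub0])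
      show "finite (\<zeta> ` S0)" using insert.prems(2) by (simp add: S0_def)
      show "\<forall>s\<in>\<zeta> ` S0. supp_ok n P s"
        unfolding supp_ok_def S0_def \<zeta>_def using suppins by auto
      show "\<forall>s\<in>\<zeta> ` S0. QP n \<delta> P s = 0"
      proof
        fix s assume "s \<in> \<zeta> ` S0"
        then obtain t where t: "t \<in> S0" "s = \<zeta> t" by auto
        have "QP n \<delta> P s = QP n \<delta> P t" unfolding t(2) \<zeta>_def
          by (rule QP_cong[OF pnot]) simp
        also have "\<dots> = 0" using t(1) insert.prems(4) QPins[of t] by (simp add: S0_def)
        finally show "QP n \<delta> P s = 0" .
      qed
      show "P \<subseteq> {2..n+1}" by fact
    qed
    moreover have "V.dim (\<zeta> ` S0) = V.dim S0" by (rule dim_inj_image[OF lin sub0 inj])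
    moreover have "V.dim S \<le> V.dim S0 + 1"
      unfolding S0_def by (rule dim_hyper[OF insert.prems(1,2)])
    ultimately show ?thesis using cardins by simp
  qed
qed



lemma Q_scale: "Qmu n \<delta> \<mu> (smul c v) = c^2 * Qmu n \<delta> \<mu> v"
  by (simp add: Qmu_def sum_distrib_left power2_eq_square algebra_simps smul_apply)

lemma Q_zero: "Qmu n \<delta> \<mu> 0 = 0"
  by (simp add: Qmu_def)

lemma Q_Delta: "v (2*n) = 0 \<Longrightarrow> v (2*n+1) = 0 \<Longrightarrow> Qmu n \<delta> \<mu> v = Qmu n \<delta> 0 v"
  by (simp add: Qmu_def)

lemma B_split: "Bmu n \<mu> v w = Bmu n 0 v w + \<mu> * (v (2*n) * w (2*n+1) + v (2*n+1) * w (2*n))"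
  by (simp add: Bmu_def)

lemma sum_reflect:
  "(\<Sum>i=2..n+1. (f::nat \<Rightarrow> 'a::comm_monoid_add) (2*n+3-i)) = (\<Sum>j=n+2..2*n+1. f j)"
  by (rule sum.reindex_bij_witness[where i="\<lambda>j. 2*n+3-j" and j="\<lambda>i. 2*n+3-i"]) auto

lemma sum_split4:
  "(\<Sum>i=1..2*n+2. (f::nat \<Rightarrow> 'a::comm_monoid_add) i)
     = f 1 + (\<Sum>i=2..n+1. f i) + (\<Sum>i=n+2..2*n+1. f i) + f (2*n+2)"
proof -
  have e: "{1..2*n+2} = insert 1 ({2..n+1} \<union> insert (2*n+2) {n+2..2*n+1})" by auto
  have "sum f {1..2*n+2} = f 1 + sum f ({2..n+1} \<union> insert (2*n+2) {n+2..2*n+1})"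
    unfolding e by (rule sum.insert) auto
  also have "sum f ({2..n+1} \<union> insert (2*n+2) {n+2..2*n+1}) = sum f {2..n+1} + sum f (insert (2*n+2) {n+2..2*n+1})"
    by (rule sum.union_disjoint) auto
  also have "sum f (insert (2*n+2) {n+2..2*n+1}) = f (2*n+2) + sum f {n+2..2*n+1}"
    by (rule sum.insert) auto
  finally show ?thesis by (simp add: ac_simps)
qed

lemma Q_add:
  fixes v w :: "nat \<Rightarrow> 'a::field"
  assumes c2: "CHAR('a) = 2"
  shows "Qmu n \<delta> \<mu> (v + w) = Qmu n \<delta> \<mu> v + Qmu n \<delta> \<mu> w + Bmu n \<mu> v w"
proof -
  define f where "f i = v i * w (2*n+3-i)" for i
  have h1: "(\<Sum>i=2..n+1. (v+w) i * (v+w) (2*n+3-i)) = (\<Sum>i=2..n+1. v i * v (2*n+3-i))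
     + (\<Sum>i=2..n+1. w i * w (2*n+3-i)) + (\<Sum>i=2..n+1. f i) + (\<Sum>i=n+2..2*n+1. f i)"
  proof -
    have "(\<Sum>i=2..n+1. (v+w) i * (v+w) (2*n+3-i)) = (\<Sum>i=2..n+1. v i * v (2*n+3-i)
       + w i * w (2*n+3-i) + f i + w i * v (2*n+3-i))"
      by (rule sum.cong) (auto simp: f_def algebra_simps)
    also have "\<dots> = (\<Sum>i=2..n+1. v i * v (2*n+3-i))
     + (\<Sum>i=2..n+1. w i * w (2*n+3-i)) + (\<Sum>i=2..n+1. f i) + (\<Sum>i=2..n+1. w i * v (2*n+3-i))"
      by (simp add: sum.distrib)
    also have "(\<Sum>i=2..n+1. w i * v (2*n+3-i)) = (\<Sum>i=2..n+1. f (2*n+3-i))"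
      by (rule sum.cong) (auto simp: f_def mult.commute)
    also have "\<dots> = (\<Sum>j=n+2..2*n+1. f j)" by (rule sum_reflect)
    finally show ?thesis .
  qed
  have h2: "Bmu n \<mu> v w = f 1 + (\<Sum>i=2..n+1. f i) + (\<Sum>i=n+2..2*n+1. f i) + f (2*n+2)
      + \<mu> * (v (2*n) * w (2*n+1) + v (2*n+1) * w (2*n))"
    unfolding Bmu_def f_def[symmetric] sum_split4 ..
  have f1: "f 1 = v 1 * w (2*n+2)" and fN: "f (2*n+2) = v (2*n+2) * w 1" by (simp_all add: f_def)
  have sq: "\<And>a b::'a. (a+b)^2 = a^2 + b^2" using char2_sq_add[OF c2] .
  define Av where "Av = (\<Sum>i=2..n+1. v i * v (2*n+3-i))"
  define Aw where "Aw = (\<Sum>i=2..n+1. w i * w (2*n+3-i))"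
  define F2 where "F2 = (\<Sum>i=2..n+1. f i)"
  define F3 where "F3 = (\<Sum>i=n+2..2*n+1. f i)"
  have Qv: "Qmu n \<delta> \<mu> v = v 1 ^ 2 + v 1 * v (2*n+2) + \<delta> * v (2*n+2) ^ 2 + Av
     + \<mu> * (v (2*n) ^ 2 + v (2*n) * v (2*n+1) + \<delta> * v (2*n+1) ^ 2)"
    unfolding Qmu_def Av_def ..
  have Qw: "Qmu n \<delta> \<mu> w = w 1 ^ 2 + w 1 * w (2*n+2) + \<delta> * w (2*n+2) ^ 2 + Aw
     + \<mu> * (w (2*n) ^ 2 + w (2*n) * w (2*n+1) + \<delta> * w (2*n+1) ^ 2)"
    unfolding Qmu_def Aw_def ..
  have Qvw: "Qmu n \<delta> \<mu> (v+w) = (v 1 + w 1) ^ 2 + (v 1 + w 1) * (v (2*n+2) + w (2*n+2))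
     + \<delta> * (v (2*n+2) + w (2*n+2)) ^ 2 + (Av + Aw + F2 + F3)
     + \<mu> * ((v (2*n) + w (2*n)) ^ 2 + (v (2*n) + w (2*n)) * (v (2*n+1) + w (2*n+1))
     + \<delta> * (v (2*n+1) + w (2*n+1)) ^ 2)"
    unfolding Qmu_def h1 Av_def Aw_def F2_def F3_def by simp
  have Bvw: "Bmu n \<mu> v w = v 1 * w (2*n+2) + F2 + F3 + v (2*n+2) * w 1
      + \<mu> * (v (2*n) * w (2*n+1) + v (2*n+1) * w (2*n))"
    unfolding h2 f1 fN F2_def F3_def ..
  show ?thesis
    unfolding Qv Qw Qvw Bvw sq
    by (simp add: algebra_simps)
qed



lemma sqrt_exists:
  assumes c2: "CHAR('a::{finite,field}) = 2"
  shows "\<exists>c::'a. c^2 = a"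
proof -
  have "inj (\<lambda>c::'a. c^2)"
  proof (rule injI)
    fix x y :: 'a assume "x^2 = y^2"
    then have "(x + y)^2 = 0" using char2_sq_add[OF c2, of x y] char2_add_self[OF c2] by simp
    then have "x + y = 0" by simp
    then have "x = - y" by (simp add: eq_neg_iff_add_eq_0)
    then show "x = y" using uminus_CHAR_2[OF c2] by simp
  qed
  then have "surj (\<lambda>c::'a. c^2)" by (rule finite_UNIV_inj_surj[OF finite_UNIV])
  then show ?thesis by (metis surjD)
qed

lemma span1: "x \<in> V.span {w} \<longleftrightarrow> (\<exists>b. x = smul b w)"
  using V.span_breakdown_eq[of x w "{}"] by (auto simp: fun_eq_iff smul_apply)

lemma span2: "x \<in> V.span {u, w} \<longleftrightarrow> (\<exists>a b. x = smul a u + smul b w)"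
proof -
  have "x \<in> V.span {u, w} \<longleftrightarrow> (\<exists>a. x - smul a u \<in> V.span {w})"
    using V.span_breakdown_eq[of x u "{w}"] by simp
  also have "\<dots> \<longleftrightarrow> (\<exists>a b. x = smul a u + smul b w)"
  proof
    assume "\<exists>a. x - smul a u \<in> V.span {w}"
    then obtain a b where "x - smul a u = smul b w" using span1 by blast
    then have "x = smul a u + smul b w" by (simp add: fun_eq_iff algebra_simps smul_apply)
    then show "\<exists>a b. x = smul a u + smul b w" by blast
  next
    assume "\<exists>a b. x = smul a u + smul b w"
    then obtain a b where "x = smul a u + smul b w" by blast
    then have "x - smul a u = smul b w" by (simp add: fun_eq_iff smul_apply)
    then show "\<exists>a. x - smul a u \<in> V.span {w}" using span1 by blast
  qed
  finally show ?thesis .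
qed

lemma span3: "x \<in> V.span {d, u, w} \<longleftrightarrow> (\<exists>c a b. x = smul c d + smul a u + smul b w)"
proof -
  have "x \<in> V.span {d, u, w} \<longleftrightarrow> (\<exists>c. x - smul c d \<in> V.span {u, w})"
    using V.span_breakdown_eq[of x d "{u, w}"] by simp
  also have "\<dots> \<longleftrightarrow> (\<exists>c a b. x = smul c d + smul a u + smul b w)"
  proof
    assume "\<exists>c. x - smul c d \<in> V.span {u, w}"
    then obtain c a b where "x - smul c d = smul a u + smul b w" using span2 by blast
    then have "x = smul c d + smul a u + smul b w" by (simp add: fun_eq_iff algebra_simps smul_apply)
    then show "\<exists>c a b. x = smul c d + smul a u + smul b w" by blast
  next
    assume "\<exists>c a b. x = smul c d + smul a u + smul b w"
    then obtain c a b where "x = smul c d + smul a u + smul b w" by blast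
    then have "x - smul c d = smul a u + smul b w" by (simp add: fun_eq_iff smul_apply)
    then show "\<exists>c. x - smul c d \<in> V.span {u, w}" using span2 by blast
  qed
  finally show ?thesis .
qed



theorem mainTheorem5:
  fixes \<delta> \<mu> :: "'a::{finite, field}" and n :: nat and g :: "(nat \<Rightarrow> 'a) set"
  assumes "CHAR('a) = 2"
    and "n \<ge> 2"
    and "irreducible [:\<delta>, 1, 1:]"
    and "\<mu> \<noteq> 0"
    and "generator n 0 g"
    and "is_space n (n - 1) (g \<inter> Delta n)"
  shows "\<exists>K. is_space n (n - 2) K \<and> cone_over_nondeg_conic n \<delta> \<mu> g K"
proof -
  note c2 = assms(1) and n2 = assms(2) and irr = assms(3)
  from assms(5) have gA: "g \<subseteq> ambient n" and gS: "V.subspace g" and gdim: "V.dim g = n+1"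
    and iso: "\<And>v w. v \<in> g \<Longrightarrow> w \<in> g \<Longrightarrow> Bmu n 0 v w = 0"
    unfolding generator_def is_space_def by auto
  define D where "D = g \<inter> Delta n"
  from assms(6) have DS: "V.subspace D" and Ddim: "V.dim D = n - 1" and DA: "D \<subseteq> ambient n"
    unfolding is_space_def D_def by auto
  have fing: "finite g" using gA finite_ambient by (rule finite_subset)
  have Dg: "D \<subseteq> g" by (simp add: D_def)
  have Dcoord: "v (2*n) = 0" "v (2*n+1) = 0" if "v \<in> D" for v
    using that by (auto simp: D_def Delta_def)
  define g1 where "g1 = {v\<in>g. v (2*n) = 0}"
  have D_eq: "D = {v\<in>g1. v (2*n+1) = 0}" using gA by (auto simp: D_def Delta_def g1_def)
  have g1S: "V.subspace g1" unfolding g1_def by (rule subspace_coord0[OF gS])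
  have fing1: "finite g1" using fing by (simp add: g1_def)
  have h1: "V.dim g \<le> V.dim g1 + 1" unfolding g1_def by (rule dim_hyper[OF gS fing])
  have h2: "V.dim g1 \<le> V.dim D + 1" unfolding D_eq by (rule dim_hyper[OF g1S fing1])
  obtain x where x: "x \<in> g" "x (2*n) \<noteq> 0"
  proof -
    have "\<not>(\<forall>v\<in>g. v (2*n) = 0)"
    proof
      assume "\<forall>v\<in>g. v (2*n) = 0"
      then have "g1 = g" by (auto simp: g1_def)
      then have "V.dim g \<le> V.dim D + 1" using h2 by simp
      then show False using gdim Ddim n2 by simp
    qed
    then show ?thesis using that by auto
  qed
  obtain y where y: "y \<in> g1" "y (2*n+1) \<noteq> 0"
  proof -
    have "\<not>(\<forall>v\<in>g1. v (2*n+1) = 0)"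
    proof
      assume "\<forall>v\<in>g1. v (2*n+1) = 0"
      then have "D = g1" unfolding D_eq by auto
      then have "V.dim g \<le> V.dim D + 1" using h1 by simp
      then show False using gdim Ddim n2 by simp
    qed
    then show ?thesis using that by auto
  qed
  define w where "w = smul (1 / y (2*n+1)) y"
  define x' where "x' = smul (1 / x (2*n)) x"
  define u where "u = x' - smul (x' (2*n+1)) w"
  have yg: "y \<in> g" "y (2*n) = 0" using y(1) by (auto simp: g1_def)
  have wg: "w \<in> g" unfolding w_def using yg(1) gS by (rule V.subspace_scale[rotated])
  have x'g: "x' \<in> g" unfolding x'_def using x(1) gS by (rule V.subspace_scale[rotated])
  have ug: "u \<in> g" unfolding u_def using x'g wg gS by (simp add: V.subspace_diff V.subspace_scale)
  have w1: "w (2*n) = 0" "w (2*n+1) = 1" using yg(2) y(2) by (simp_all add: w_def smul_apply)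
  have x'1: "x' (2*n) = 1" using x(2) by (simp add: x'_def smul_apply)
  have u1: "u (2*n) = 1" "u (2*n+1) = 0" using w1 x'1 by (simp_all add: u_def smul_apply)
  have Q0add: "Qmu n \<delta> 0 (v + v') = Qmu n \<delta> 0 v + Qmu n \<delta> 0 v'" if "v \<in> g" "v' \<in> g" for v v'
    using Q_add[OF c2, of n \<delta> 0 v v'] iso[OF that] by simp
  have "\<exists>d0\<in>D. Qmu n \<delta> 0 d0 \<noteq> 0"
  proof (rule ccontr)
    assume "\<not> (\<exists>d0\<in>D. Qmu n \<delta> 0 d0 \<noteq> 0)"
    then have allz: "\<And>d. d \<in> D \<Longrightarrow> Qmu n \<delta> 0 d = 0" by auto
    define \<rho> where "\<rho> = (\<lambda>v::nat \<Rightarrow> 'a. \<lambda>i. if i = 2 \<or> i = 3 then 0 else v i)"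
    have lin\<rho>: "Vector_Spaces.linear smul smul \<rho>"
      by (rule linear_smulI) (auto simp: \<rho>_def fun_eq_iff smul_apply)
    have inj\<rho>: "inj_on \<rho> D"
    proof -
      have "z = 0" if z: "z \<in> D" "\<rho> z = 0" for z
      proof -
        have zj: "z j = 0" if "j \<noteq> 2" "j \<noteq> 3" for j
          using fun_cong[OF z(2), of j] that by (simp add: \<rho>_def)
        have zg: "z \<in> g" using z(1) Dg by auto
        have Bz: "Bmu n 0 z v = z 2 * v (2*n+1) + z 3 * v (2*n)" for v
        proof -
          have "Bmu n 0 z v = (\<Sum>i=1..2*n+2. z i * v (2*n+3-i))" by (simp add: Bmu_def)
          also have "\<dots> = (\<Sum>i\<in>{2,3}. z i * v (2*n+3-i))"
            by (rule sum.mono_neutral_right) (use zj n2 in auto)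
          also have "\<dots> = z 2 * v (2*n+1) + z 3 * v (2*n)" by simp
          finally show ?thesis .
        qed
        have "z 3 = 0" using Bz[of u] iso[OF zg ug] u1 by simp
        moreover have "z 2 = 0" using Bz[of w] iso[OF zg wg] w1 by simp
        ultimately have "z j = 0" for j using zj by (cases "j = 2 \<or> j = 3") auto
        then show "z = 0" by (intro ext) (simp add: zero_fun_def)
      qed
      then show ?thesis using VP.linear_inj_on_iff_eq_0[OF lin\<rho> DS] by blast
    qed
    define P where "P = {4..n+1}"
    have "V.dim (\<rho> ` D) \<le> card P"
    proof (rule core[of P n \<delta>])
      show "finite P" by (simp add: P_def)
      show "P \<subseteq> {2..n+1}" by (auto simp: P_def)
      show "irreducible [:\<delta>, 1, 1:]" by (rule irr)
      show "V.subspace (\<rho> ` D)" by (rule VP.linear_subspace_image[OF lin\<rho> DS])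
      show "finite (\<rho> ` D)" using fing Dg finite_subset by blast
      show "\<forall>s\<in>\<rho> ` D. supp_ok n P s"
      proof
        fix s assume "s \<in> \<rho> ` D"
        then obtain d where d: "d \<in> D" "s = \<rho> d" by auto
        have dA: "d j = 0" if "j \<notin> {1..2*n+2}" for j using d(1) DA that by (auto simp: ambient_def)
        show "supp_ok n P s" unfolding supp_ok_def
        proof (intro allI impI)
          fix j assume j: "j \<notin> {1, 2*n+2} \<union> P \<union> (\<lambda>i. 2*n+3-i) ` P"
          have "j \<notin> {n+2..2*n-1}"
          proof
            assume jj: "j \<in> {n+2..2*n-1}"
            have "j \<in> (\<lambda>i. 2*n+3-i) ` P"
              by (rule image_eqI[of _ _ "2*n+3-j"]) (use jj in \<open>auto simp: P_def\<close>)
            then show False using j by auto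
          qed
          then have "j = 2 \<or> j = 3 \<or> j = 2*n \<or> j = 2*n+1 \<or> j \<notin> {1..2*n+2}"
            using j by (auto simp: P_def)
          then show "s j = 0" using d Dcoord[OF d(1)] dA by (auto simp: \<rho>_def)
        qed
      qed
      show "\<forall>s\<in>\<rho> ` D. QP n \<delta> P s = 0"
      proof
        fix s assume "s \<in> \<rho> ` D"
        then obtain d where d: "d \<in> D" "s = \<rho> d" by auto
        have e23: "{2..n+1} = insert 2 (insert 3 P)" using n2 by (auto simp: P_def)
        have "Qmu n \<delta> 0 d = d 1 ^ 2 + d 1 * d (2*n+2) + \<delta> * d (2*n+2) ^ 2
            + (\<Sum>i\<in>P. d i * d (2*n+3-i))"
          unfolding Qmu_def e23 using Dcoord[OF d(1)] by (simp add: P_def)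
        also have "\<dots> = QP n \<delta> P s"
        proof -
          have "(\<Sum>i\<in>P. d i * d (2*n+3-i)) = (\<Sum>i\<in>P. s i * s (2*n+3-i))"
            by (rule sum.cong) (auto simp: P_def d(2) \<rho>_def)
          moreover have "s 1 = d 1" "s (2*n+2) = d (2*n+2)" using n2 by (auto simp: d(2) \<rho>_def)
          ultimately show ?thesis by (simp add: QP_def)
        qed
        finally show "QP n \<delta> P s = 0" using allz[OF d(1)] by simp
      qed
    qed
    moreover have "V.dim (\<rho> ` D) = V.dim D" by (rule dim_inj_image[OF lin\<rho> DS inj\<rho>])
    moreover have "card P = n - 2" by (simp add: P_def)
    ultimately show False using Ddim n2 by simp
  qed
  then obtain d0 where d0: "d0 \<in> D" "Qmu n \<delta> 0 d0 \<noteq> 0" by blast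
  have d0g: "d0 \<in> g" and d01: "d0 (2*n) = 0" "d0 (2*n+1) = 0" using d0(1) Dg Dcoord by auto
  define K where "K = {v\<in>D. Qmu n \<delta> 0 v = 0}"
  have KD: "K \<subseteq> D" by (auto simp: K_def)
  have KS: "V.subspace K"
    unfolding V.subspace_def
  proof (intro conjI ballI allI)
    show "0 \<in> K" using V.subspace_0[OF DS] by (simp add: K_def Q_zero)
    fix v v' assume v: "v \<in> K" "v' \<in> K"
    then have vD: "v \<in> D" "v' \<in> D" and vq: "Qmu n \<delta> 0 v = 0" "Qmu n \<delta> 0 v' = 0" by (auto simp: K_def)
    have "Qmu n \<delta> 0 (v + v') = 0" using Q0add[of v v'] vD Dg vq by auto
    then show "v + v' \<in> K" using V.subspace_add[OF DS vD] by (auto simp: K_def)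
  next
    fix c v assume "v \<in> K"
    then show "smul c v \<in> K" using V.subspace_scale[OF DS] by (auto simp: K_def Q_scale)
  qed
  have "K \<subseteq> g" using KD Dg by auto
  then have finK: "finite K" using fing by (rule finite_subset)
  have decomp: "\<exists>c. d - smul c d0 \<in> K" if d: "d \<in> D" for d
  proof -
    obtain c where c: "c^2 = Qmu n \<delta> 0 d / Qmu n \<delta> 0 d0" using sqrt_exists[OF c2] by blast
    have e: "d - smul c d0 = d + smul (-c) d0" by (simp add: fun_eq_iff smul_apply)
    have inD: "d - smul c d0 \<in> D" using d d0(1) DS by (simp add: V.subspace_diff V.subspace_scale)
    have m: "smul (-c) d0 \<in> g" using V.subspace_scale[OF gS d0g] by blast
    have dg': "d \<in> g" using d Dg by auto
    have "Qmu n \<delta> 0 (d + smul (-c) d0) = Qmu n \<delta> 0 d + Qmu n \<delta> 0 (smul (-c) d0)"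
      by (rule Q0add[OF dg' m])
    also have "Qmu n \<delta> 0 (smul (-c) d0) = (-c)^2 * Qmu n \<delta> 0 d0" by (rule Q_scale)
    finally have X: "Qmu n \<delta> 0 (d + smul (-c) d0) = Qmu n \<delta> 0 d + (-c)^2 * Qmu n \<delta> 0 d0" .
    have "Qmu n \<delta> 0 (d - smul c d0) = Qmu n \<delta> 0 d + c^2 * Qmu n \<delta> 0 d0"
      using X unfolding e power2_minus .
    also have "\<dots> = Qmu n \<delta> 0 d + Qmu n \<delta> 0 d" using c d0(2) by simp
    also have "\<dots> = 0" by (rule char2_add_self[OF c2])
    finally show ?thesis using inD by (auto simp: K_def)
  qed
  have d0K: "d0 \<notin> K" using d0 by (simp add: K_def)
  obtain BK where BK: "BK \<subseteq> K" "V.independent BK" "K \<subseteq> V.span BK" "card BK = V.dim K"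
    using V.basis_exists by blast
  have finBK: "finite BK" using BK(1) finK by (rule finite_subset)
  have spBK: "V.span BK \<subseteq> K" using BK(1) KS by (rule V.span_minimal)
  have "card (insert d0 BK) = V.dim D"
  proof (rule V.basis_card_eq_dim)
    show "insert d0 BK \<subseteq> D" using BK(1) KD d0(1) by auto
    show "D \<subseteq> V.span (insert d0 BK)"
    proof
      fix d assume "d \<in> D"
      then obtain c where "d - smul c d0 \<in> K" using decomp by blast
      then have "d - smul c d0 \<in> V.span BK" using BK(3) by auto
      then show "d \<in> V.span (insert d0 BK)" using V.span_breakdown_eq by blast
    qed
    have "d0 \<notin> V.span BK" using spBK d0K by auto
    moreover have "d0 \<notin> BK" using BK(1) d0K by auto
    ultimately show "V.independent (insert d0 BK)"
      using BK(2) by (simp add: V.independent_insert)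
  qed
  moreover have "d0 \<notin> BK" using d0K BK(1) by auto
  then have "card (insert d0 BK) = card BK + 1" using finBK by simp
  ultimately have Kdim: "V.dim K = n - 2" using BK(4) Ddim n2 by simp
  have KA: "K \<subseteq> ambient n" using KD DA by auto
  have Kcoord: "k (2*n) = 0" "k (2*n+1) = 0" "Qmu n \<delta> 0 k = 0" if "k \<in> K" for k
    using that KD Dcoord by (auto simp: K_def)
  define P where "P = V.span {d0, u, w}"
  have Pg: "P \<subseteq> g" unfolding P_def using d0g ug wg gS by (intro V.span_minimal) auto
  have Pmem: "p \<in> P \<longleftrightarrow> (\<exists>c a b. p = smul c d0 + smul a u + smul b w)" for p
    unfolding P_def by (rule span3)
  have pco: "(smul c d0 + smul a u + smul b w) (2*n) = a"
            "(smul c d0 + smul a u + smul b w) (2*n+1) = b" for c a b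
    using d01 u1 w1 by (simp_all add: smul_apply)
  have Qd0: "Qmu n \<delta> \<mu>' (smul c d0) = c^2 * Qmu n \<delta> 0 d0" for c \<mu>'
    using d01 Q_Delta[of d0 n \<delta> \<mu>'] by (simp add: Q_scale)
  have pd0: "smul c d0 + smul 0 u + smul 0 w = smul c d0" for c
    by (simp add: fun_eq_iff smul_apply)
  have uw: "u \<noteq> w"
  proof assume "u = w" then show False using u1 w1 by simp qed
  have d0u: "d0 \<noteq> u"
  proof assume "d0 = u" then show False using u1 d01 by simp qed
  have d0w: "d0 \<noteq> w"
  proof assume "d0 = w" then show False using w1 d01 by simp qed
  have indep: "V.independent {d0, u, w}"
  proof -
    have w0: "w \<noteq> 0"
    proof
      assume "w = 0" then have "w (2*n+1) = 0" by simp
      then show False using w1 by simp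
    qed
    have "V.independent {w}" using w0 by simp
    moreover have "u \<notin> V.span {w}"
    proof
      assume "u \<in> V.span {w}"
      then obtain b where "u = smul b w" using span1 by blast
      then have "u (2*n) = 0" using w1 by (simp add: smul_apply)
      then show False using u1 by simp
    qed
    moreover have "u \<noteq> w" using uw by auto
    ultimately have "V.independent {u, w}" by (simp add: V.independent_insert)
    moreover have "d0 \<notin> V.span {u, w}"
    proof
      assume "d0 \<in> V.span {u, w}"
      then obtain a b where ab: "d0 = smul a u + smul b w" using span2 by blast
      have "a = 0" using fun_cong[OF ab, of "2*n"] d01 u1 w1 by (simp add: smul_apply)
      moreover have "b = 0" using fun_cong[OF ab, of "2*n+1"] d01 u1 w1 by (simp add: smul_apply)
      ultimately have "d0 = 0" using ab by (simp add: fun_eq_iff smul_apply)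
      then show False using d0(2) by (simp add: Q_zero)
    qed
    moreover have "d0 \<noteq> u" "d0 \<noteq> w" using d0u d0w by auto
    ultimately show ?thesis by (simp add: V.independent_insert)
  qed
  have card3: "card {d0, u, w} = 3" using d0u d0w uw by auto
  have Pspace: "is_space n 3 P"
    unfolding is_space_def
  proof (intro conjI)
    show "P \<subseteq> ambient n" using Pg gA by auto
    show "V.subspace P" unfolding P_def by (rule V.subspace_span)
    show "V.dim P = 3" unfolding P_def using V.dim_span_eq_card_independent[OF indep] card3 by simp
  qed
  have uP: "u \<in> P" and wP: "w \<in> P" unfolding P_def by (auto intro: V.span_base)
  have QkP: "Qmu n \<delta> \<mu> (k + p) = Qmu n \<delta> \<mu> p" if "k \<in> K" "p \<in> g" for k p
  proof -
    have kg: "k \<in> g" using that KD Dg by auto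
    have "Qmu n \<delta> \<mu> k = 0" using Kcoord[OF that(1)] Q_Delta[of k n \<delta> \<mu>] by simp
    moreover have "Bmu n \<mu> k p = 0" using B_split[of n \<mu> k p] iso[OF kg that(2)] Kcoord[OF that(1)] by simp
    ultimately show ?thesis using Q_add[OF c2, of n \<delta> \<mu> k p] by simp
  qed
  have gdec: "\<exists>k\<in>K. \<exists>p\<in>P. v = k + p" if v: "v \<in> g" for v
  proof -
    define a where "a = v (2*n)"
    define b where "b = v (2*n+1)"
    define d where "d = v - smul a u - smul b w"
    have dg: "d \<in> g" unfolding d_def using v ug wg gS by (simp add: V.subspace_diff V.subspace_scale)
    have "d (2*n) = 0" "d (2*n+1) = 0" using u1 w1 by (simp_all add: d_def a_def b_def smul_apply)
    then have dD: "d \<in> D" using dg gA by (auto simp: D_def Delta_def)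
    obtain c where c: "d - smul c d0 \<in> K" using decomp[OF dD] by blast
    have "smul c d0 + smul a u + smul b w \<in> P" using Pmem by blast
    moreover have "v = (d - smul c d0) + (smul c d0 + smul a u + smul b w)"
      by (simp add: d_def fun_eq_iff smul_apply)
    ultimately show ?thesis using c by blast
  qed
  have cone: "cone_over_nondeg_conic n \<delta> \<mu> g K"
    unfolding cone_over_nondeg_conic_def
  proof (intro exI conjI)
    show "is_space n 3 P" by (rule Pspace)
    show "K \<subseteq> g" using KD Dg by auto
    show "P \<subseteq> g" by (rule Pg)
    show "K \<inter> P = {0}"
    proof
      show "K \<inter> P \<subseteq> {0}"
      proof
        fix p assume p: "p \<in> K \<inter> P"
        then obtain c a b where pe: "p = smul c d0 + smul a u + smul b w" using Pmem by blast
        have "a = 0" "b = 0" using Kcoord[of p] p pco[of c a b] pe by auto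
        then have pe2: "p = smul c d0" using pe pd0 by simp
        have "c^2 * Qmu n \<delta> 0 d0 = 0" using Kcoord(3)[of p] p pe2 Qd0[of 0 c] by simp
        then have "c = 0" using d0(2) by simp
        then show "p \<in> {0}" using pe2 by (simp add: fun_eq_iff smul_apply)
      qed
      show "{0} \<subseteq> K \<inter> P" using V.subspace_0[OF KS] V.span_zero by (auto simp: P_def)
    qed
    show "g = {k + p | k p. k \<in> K \<and> p \<in> P}"
    proof
      show "g \<subseteq> {k + p | k p. k \<in> K \<and> p \<in> P}" using gdec by blast
      show "{k + p | k p. k \<in> K \<and> p \<in> P} \<subseteq> g"
      proof
        fix v assume "v \<in> {k + p | k p. k \<in> K \<and> p \<in> P}"
        then obtain k p where kp: "k \<in> K" "p \<in> P" "v = k + p" by blast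
        have "k \<in> g" "p \<in> g" using kp KD Dg Pg by auto
        then show "v \<in> g" using kp(3) V.subspace_add[OF gS] by simp
      qed
    qed
    show "{v \<in> g. Qmu n \<delta> \<mu> v = 0} = {k + p | k p. k \<in> K \<and> p \<in> P \<and> Qmu n \<delta> \<mu> p = 0}"
    proof
      show "{v \<in> g. Qmu n \<delta> \<mu> v = 0} \<subseteq> {k + p | k p. k \<in> K \<and> p \<in> P \<and> Qmu n \<delta> \<mu> p = 0}"
      proof
        fix v assume v: "v \<in> {v \<in> g. Qmu n \<delta> \<mu> v = 0}"
        then obtain k p where kp: "k \<in> K" "p \<in> P" "v = k + p" using gdec by blast
        then have "Qmu n \<delta> \<mu> p = 0" using QkP[of k p] Pg v by auto
        then show "v \<in> {k + p | k p. k \<in> K \<and> p \<in> P \<and> Qmu n \<delta> \<mu> p = 0}" using kp by blast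
      qed
      show "{k + p | k p. k \<in> K \<and> p \<in> P \<and> Qmu n \<delta> \<mu> p = 0} \<subseteq> {v \<in> g. Qmu n \<delta> \<mu> v = 0}"
      proof
        fix v assume "v \<in> {k + p | k p. k \<in> K \<and> p \<in> P \<and> Qmu n \<delta> \<mu> p = 0}"
        then obtain k p where kp: "k \<in> K" "p \<in> P" "Qmu n \<delta> \<mu> p = 0" "v = k + p" by blast
        have "k \<in> g" "p \<in> g" using kp KD Dg Pg by auto
        then have "v \<in> g" using kp(4) V.subspace_add[OF gS] by simp
        moreover have "Qmu n \<delta> \<mu> v = 0" using kp QkP[of k p] Pg by auto
        ultimately show "v \<in> {v \<in> g. Qmu n \<delta> \<mu> v = 0}" by simp
      qed
    qed
    show "\<forall>p\<in>P. Qmu n \<delta> \<mu> p = 0 \<and> (\<forall>p'\<in>P. Bmu n \<mu> p p' = 0) \<longrightarrow> p = 0"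
    proof (intro ballI impI)
      fix p assume pP: "p \<in> P" and h: "Qmu n \<delta> \<mu> p = 0 \<and> (\<forall>p'\<in>P. Bmu n \<mu> p p' = 0)"
      then obtain c a b where pe: "p = smul c d0 + smul a u + smul b w" using Pmem by blast
      have pg: "p \<in> g" using pP Pg by auto
      have "Bmu n \<mu> p u = \<mu> * b"
        using B_split[of n \<mu> p u] iso[OF pg ug] u1 pco[of c a b] pe by simp
      then have "b = 0" using h uP assms(4) by auto
      have "Bmu n \<mu> p w = \<mu> * a"
        using B_split[of n \<mu> p w] iso[OF pg wg] w1 pco[of c a b] pe by simp
      then have "a = 0" using h wP assms(4) by auto
      have pe2: "p = smul c d0" using pe pd0 \<open>a = 0\<close> \<open>b = 0\<close> by simp
      have "c^2 * Qmu n \<delta> 0 d0 = 0" using h pe2 Qd0[of \<mu> c] by simp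
      then have "c = 0" using d0(2) by simp
      then show "p = 0" using pe2 by (simp add: fun_eq_iff smul_apply)
    qed
  qed
  have "is_space n (n - 2) K" unfolding is_space_def using KA KS Kdim by simp
  then show ?thesis using cone by blast
qed


end
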